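(* Let $v:\mathbb{R}\to[1,\infty)$ be an admissible function. Then there is an admissible function $\tilde v\in C^\infty(\mathbb{R})$ equivalent to $v$, i.e. such that $\frac1c\tilde v\le v\le c\tilde v$ for some $c>0$. If $v$ is even, then $\tilde v$ can be chosen to be even as well.
   Context: A measurable function $v:\mathbb{R}\to(0,\infty)$ is called admissible if $v(s)\ge1$ for all $s\in\mathbb{R}$ and $\sup_{s,t\in\mathbb{R}}\frac{v(s+t)}{v(s)+v(t)}<\infty$. *)

theory Defs
  imports "HOL-Analysis.Analysis"
begin

definition admissible :: "(real \<Rightarrow> real) \<Rightarrow> bool" where
  "admissible v \<longleftrightarrow> v \<in> borel_measurable borel \<and> (\<forall>s. v s \<ge> 1) \<and>
     (\<exists>C. \<forall>s t. v (s + t) / (v s + v t) \<le> C)"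

definition smooth_real :: "(real \<Rightarrow> real) \<Rightarrow> bool" where
  "smooth_real f \<longleftrightarrow> (\<exists>D :: nat \<Rightarrow> real \<Rightarrow> real. D 0 = f \<and>
     (\<forall>n x. (D n has_real_derivative D (Suc n) x) (at x)))"

end

theory Submission
  imports Defs "HOL-Computational_Algebra.Polynomial"
begin

lemma adm_bound:
  assumes "admissible v"
  shows "\<exists>C>0. \<forall>s t. v (s + t) \<le> C * (v s + v t)"
proof -
  from assms obtain C where C: "\<forall>s t. v (s + t) / (v s + v t) \<le> C" and v1: "\<forall>s. v s \<ge> 1"
    unfolding admissible_def by blast
  have "\<forall>s t. v (s + t) \<le> C * (v s + v t)"
  proof (intro allI)
    fix s t
    have "v s + v t > 0" using v1 by (smt (verit))
    then show "v (s + t) \<le> C * (v s + v t)" using C[rule_format, of s t]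
      by (simp add: pos_divide_le_eq mult.commute)
  qed
  moreover have "C > 0" using C[rule_format, of 0 0] v1 
    by (smt (verit, ccfv_SIG) divide_pos_pos)
  ultimately show ?thesis by blast
qed

lemma adm_locbdd:
  assumes adm: "admissible v"
  shows "\<exists>B. \<forall>y. \<bar>y\<bar> \<le> 1 \<longrightarrow> v y \<le> B"
proof -
  from adm have meas[measurable]: "v \<in> borel_measurable borel" and v1: "\<forall>s. v s \<ge> 1"
    unfolding admissible_def by blast+
  obtain C where C: "C > 0" "\<forall>s t. v (s + t) \<le> C * (v s + v t)" using adm_bound[OF adm] by blast
  define A where "A i = {y\<in>{-2..2::real}. v y \<le> real i}" for i :: nat
  have Asets: "A i \<in> sets lborel" for i unfolding A_def by measurable
  have inc: "incseq A" unfolding A_def incseq_def by auto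
  have U: "(\<Union>i. A i) = {-2..2}"
  proof
    show "(\<Union>i. A i) \<subseteq> {-2..2}" unfolding A_def by auto
    show "{-2..2} \<subseteq> (\<Union>i. A i)"
    proof
      fix y :: real assume "y \<in> {-2..2}"
      moreover have "v y \<le> real (nat \<lceil>v y\<rceil>)" by linarith
      ultimately show "y \<in> (\<Union>i. A i)" unfolding A_def by blast
    qed
  qed
  have "(\<lambda>i. measure lborel (A i)) \<longlonglongrightarrow> measure lborel (\<Union>i. A i)"
    by (rule Lim_measure_incseq) (use Asets inc U in auto)
  then have "(\<lambda>i. measure lborel (A i)) \<longlonglongrightarrow> 4" using U by simp
  then have "eventually (\<lambda>i. 3 < measure lborel (A i)) sequentially"
    by (rule order_tendstoD) simp
  then obtain i where i: "3 < measure lborel (A i)" by (meson eventually_sequentially order.refl)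
  have "v y \<le> 2 * C * real i" if y: "\<bar>y\<bar> \<le> 1" for y
  proof -
    define F where "F = (\<lambda>t. y - t) -` A i"
    have fm: "(\<lambda>t. y - t) \<in> borel_measurable (lborel::real measure)" by measurable
    have "distr lborel borel (\<lambda>t::real. y - t) = distr (distr lborel borel uminus) borel ((+) y)"
      by (subst distr_distr) (auto simp: o_def)
    also have "\<dots> = lborel" by (simp add: lborel_distr_uminus lborel_distr_plus)
    finally have D: "distr lborel borel (\<lambda>t::real. y - t) = lborel" .
    have "emeasure lborel F = emeasure (distr lborel borel (\<lambda>t::real. y - t)) (A i)"
      by (subst emeasure_distr) (use fm Asets in \<open>auto simp: F_def\<close>)
    then have eF: "emeasure lborel F = emeasure lborel (A i)" using D by simp
    have Fs: "F \<in> sets lborel" unfolding F_def using measurable_sets[OF fm, of "A i"] Asets by simp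
    have sub1: "A i \<subseteq> {-3..3}" unfolding A_def by auto
    have sub2: "F \<subseteq> {-3..3}" unfolding F_def A_def using y by auto
    have I3: "emeasure lborel {-3..3::real} < \<infinity>" by simp
    have fin1: "emeasure lborel (A i) \<noteq> \<infinity>"
    proof -
      have "emeasure lborel (A i) \<le> emeasure lborel {-3..3::real}"
        by (rule emeasure_mono) (use sub1 in auto)
      then show ?thesis using I3 by (metis leD top_greatest order.strict_iff_not)
    qed
    have fin2: "emeasure lborel F \<noteq> \<infinity>" using fin1 eF by simp
    have mF: "measure lborel F = measure lborel (A i)" using eF by (simp add: measure_def)
    have "A i \<inter> F \<noteq> {}"
    proof
      assume dis: "A i \<inter> F = {}"
      have "measure lborel (A i \<union> F) = measure lborel (A i) + measure lborel F"
        by (rule measure_Union) (use fin1 fin2 Asets Fs dis in auto)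
      also have "\<dots> > 6" using i mF by simp
      finally have "6 < measure lborel (A i \<union> F)" .
      moreover have "measure lborel (A i \<union> F) \<le> measure lborel {-3..3::real}"
        by (rule measure_mono_fmeasurable) (use sub1 sub2 Asets Fs I3 in \<open>auto simp: fmeasurable_def\<close>)
      ultimately show False by simp
    qed
    then obtain t where t: "t \<in> A i" "y - t \<in> A i" unfolding F_def by auto
    have "v y = v (t + (y - t))" by simp
    also have "\<dots> \<le> C * (v t + v (y - t))" using C by blast
    also have "\<dots> \<le> C * (real i + real i)" using t C(1) unfolding A_def
      by (intro mult_left_mono) auto
    finally show ?thesis by simp
  qed
  then show ?thesis by blast
qed



lemma poly_exp_lim: "((\<lambda>u::real. poly Q u * exp (- u)) \<longlongrightarrow> 0) at_top"
proof -
  have eq: "poly Q u * exp (- u) = (\<Sum>i\<le>degree Q. coeff Q i * (u ^ i / exp u))" for u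
  proof -
    have "poly Q u * exp (-u) = poly Q u / exp u" by (simp add: exp_minus divide_inverse)
    also have "\<dots> = (\<Sum>i\<le>degree Q. coeff Q i * u ^ i / exp u)"
      by (simp add: poly_altdef sum_divide_distrib)
    finally show ?thesis by simp
  qed
  show ?thesis unfolding eq
    by (intro tendsto_null_sum tendsto_mult_right_zero tendsto_power_div_exp_0)
qed

fun hP :: "nat \<Rightarrow> real poly" where
  "hP 0 = 1"
| "hP (Suc k) = [:0,0,1:] * (hP k - pderiv (hP k))"

definition hD :: "nat \<Rightarrow> real \<Rightarrow> real" where
  "hD k x = (if x > 0 then poly (hP k) (inverse x) * exp (- inverse x) else 0)"

lemma hD_pos_deriv:
  assumes "x > 0"
  shows "((\<lambda>y. poly (hP k) (inverse y) * exp (- inverse y)) has_real_derivative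
          poly (hP (Suc k)) (inverse x) * exp (- inverse x)) (at x)"
proof -
  let ?P = "hP k"
  have d1: "((\<lambda>y. poly ?P (inverse y)) has_real_derivative
        poly (pderiv ?P) (inverse x) * (- inverse (x^2))) (at x)"
    by (rule DERIV_chain2[OF poly_DERIV]) (use assms in \<open>auto intro!: derivative_eq_intros simp: power2_eq_square\<close>)
  have d2: "((\<lambda>y. exp (- inverse y)) has_real_derivative
        exp (- inverse x) * inverse (x^2)) (at x)"
    using assms by (auto intro!: derivative_eq_intros simp: power2_eq_square)
  show ?thesis
    by (rule DERIV_cong[OF DERIV_mult[OF d1 d2]]) (simp add: algebra_simps power2_eq_square power_inverse)
qed

lemma hD_deriv: "(hD k has_real_derivative hD (Suc k) x) (at x)"
proof (cases "x > 0")
  case True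
  show ?thesis
  proof (rule has_field_derivative_transform_within_open[OF _ open_greaterThan[of 0]])
    show "((\<lambda>y. poly (hP k) (inverse y) * exp (- inverse y)) has_real_derivative hD (Suc k) x) (at x)"
      using hD_pos_deriv[OF True] True by (simp add: hD_def)
  qed (use True in \<open>auto simp: hD_def\<close>)
next
  case False
  show ?thesis
  proof (cases "x < 0")
    case True
    show ?thesis
    proof (rule has_field_derivative_transform_within_open[OF _ open_lessThan[of 0]])
      show "((\<lambda>y. 0) has_real_derivative hD (Suc k) x) (at x)"
        using True by (simp add: hD_def)
    qed (use True in \<open>auto simp: hD_def\<close>)
  next
    case False
    with \<open>\<not> x > 0\<close> have x0: "x = 0" by simp
    have "((\<lambda>y. (hD k y - hD k 0) / (y - 0)) \<longlongrightarrow> 0) (at (0::real))"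
    proof (subst filterlim_at_split, rule conjI)
      show "((\<lambda>y. (hD k y - hD k 0) / (y - 0)) \<longlongrightarrow> 0) (at_left (0::real))"
      proof (rule Lim_transform_eventually[OF tendsto_const])
        show "\<forall>\<^sub>F y in at_left 0. 0 = (hD k y - hD k 0) / (y - 0)"
          by (simp add: eventually_at_left_field hD_def) (meson lt_ex)
      qed
      have L: "((\<lambda>y. poly (pCons 0 (hP k)) (inverse y) * exp (- inverse y)) \<longlongrightarrow> 0) (at_right (0::real))"
        by (rule filterlim_compose[OF poly_exp_lim filterlim_inverse_at_top_right])
      show "((\<lambda>y. (hD k y - hD k 0) / (y - 0)) \<longlongrightarrow> 0) (at_right (0::real))"
      proof (rule Lim_transform_eventually[OF L])
        show "\<forall>\<^sub>F y in at_right 0. poly (pCons 0 (hP k)) (inverse y) * exp (- inverse y) = (hD k y - hD k 0) / (y - 0)"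
          by (auto simp: eventually_at_right_field hD_def divide_inverse intro!: exI[of _ 1])
      qed
    qed
    then show ?thesis using x0 by (simp add: has_field_derivative_iff hD_def)
  qed
qed

lemma hD_nonpos: "x \<le> 0 \<Longrightarrow> hD k x = 0" by (simp add: hD_def)

lemma hD0_bounds: "0 \<le> hD 0 x" "hD 0 x \<le> 1"
  by (auto simp: hD_def)

lemma hD0_pos: "x > 0 \<Longrightarrow> hD 0 x = exp (- inverse x)" by (simp add: hD_def)



lemma leibniz_sum:
  fixes a b :: "nat \<Rightarrow> real"
  shows "(\<Sum>j\<le>Suc n. real (Suc n choose j) * a j * b (Suc n - j)) =
    (\<Sum>j\<le>n. real (n choose j) * (a (Suc j) * b (n - j) + a j * b (Suc (n - j))))"
proof -
  have "(\<Sum>j\<le>Suc n. real (Suc n choose j) * a j * b (Suc n - j)) =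
      a 0 * b (Suc n) + (\<Sum>j\<le>n. real (Suc n choose Suc j) * a (Suc j) * b (n - j))"
    by (subst sum.atMost_Suc_shift) simp
  also have "\<dots> = a 0 * b (Suc n) + (\<Sum>j\<le>n. real (n choose Suc j) * a (Suc j) * b (n - j))
      + (\<Sum>j\<le>n. real (n choose j) * a (Suc j) * b (n - j))"
    by (simp add: sum.distrib algebra_simps)
  also have "a 0 * b (Suc n) + (\<Sum>j\<le>n. real (n choose Suc j) * a (Suc j) * b (n - j))
      = (\<Sum>j\<le>Suc n. real (n choose j) * a j * b (Suc n - j))"
    by (subst sum.atMost_Suc_shift) simp
  also have "\<dots> = (\<Sum>j\<le>n. real (n choose j) * a j * b (Suc n - j))"
    by simp
  also have "\<dots> = (\<Sum>j\<le>n. real (n choose j) * a j * b (Suc (n - j)))"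
    by (intro sum.cong refl) (simp add: Suc_diff_le)
  finally show ?thesis by (simp add: sum.distrib algebra_simps)
qed

lemma leibniz:
  fixes f g :: "nat \<Rightarrow> real \<Rightarrow> real"
  assumes f: "\<And>n x. (f n has_real_derivative f (Suc n) x) (at x)"
      and g: "\<And>n x. (g n has_real_derivative g (Suc n) x) (at x)"
  shows "((\<lambda>x. \<Sum>j\<le>n. real (n choose j) * f j x * g (n - j) x) has_real_derivative
          (\<Sum>j\<le>Suc n. real (Suc n choose j) * f j x * g (Suc n - j) x)) (at x)"
proof -
  have "((\<lambda>x. \<Sum>j\<le>n. real (n choose j) * f j x * g (n - j) x) has_real_derivative
          (\<Sum>j\<le>n. real (n choose j) * (f (Suc j) x * g (n - j) x + f j x * g (Suc (n - j)) x))) (at x)"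
  proof (rule DERIV_sum)
    fix j
    have "((\<lambda>x. f j x * g (n-j) x) has_real_derivative f (Suc j) x * g (n - j) x + f j x * g (Suc (n - j)) x) (at x)"
      by (rule DERIV_cong[OF DERIV_mult[OF f g]]) (simp add: algebra_simps)
    then have "((\<lambda>x. real (n choose j) * (f j x * g (n-j) x)) has_real_derivative
       real (n choose j) * (f (Suc j) x * g (n - j) x + f j x * g (Suc (n - j)) x)) (at x)"
      by (rule DERIV_cmult)
    then show "((\<lambda>x. real (n choose j) * f j x * g (n-j) x) has_real_derivative
       real (n choose j) * (f (Suc j) x * g (n - j) x + f j x * g (Suc (n - j)) x)) (at x)"
      by (simp add: mult.assoc)
  qed
  then show ?thesis using leibniz_sum[of n "\<lambda>j. f j x" "\<lambda>j. g j x"] by simp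
qed


definition phiD :: "nat \<Rightarrow> real \<Rightarrow> real" where
  "phiD k x = (\<Sum>j\<le>k. real (k choose j) * hD j (1 + x) * ((-1) ^ (k - j) * hD (k - j) (1 - x)))"

lemma phiD_deriv: "(phiD k has_real_derivative phiD (Suc k) x) (at x)"
proof -
  have f: "((\<lambda>x. hD n (1 + x)) has_real_derivative hD (Suc n) (1 + x)) (at x)" for n x
  proof -
    have "((\<lambda>x. 1 + x) has_real_derivative 1) (at x)" by (auto intro!: derivative_eq_intros)
    from DERIV_chain2[OF hD_deriv this] show ?thesis by simp
  qed
  have g: "((\<lambda>x. (-1) ^ n * hD n (1 - x)) has_real_derivative (-1) ^ Suc n * hD (Suc n) (1 - x)) (at x)" for n x
  proof -
    have "((\<lambda>x. hD n (1 - x)) has_real_derivative hD (Suc n) (1 - x) * (-1)) (at x)"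
    proof -
      have "((\<lambda>x. 1 - x) has_real_derivative -1) (at x)" by (auto intro!: derivative_eq_intros)
      from DERIV_chain2[OF hD_deriv this] show ?thesis by simp
    qed
    from DERIV_cmult[OF this, of "(-1)^n"] show ?thesis by simp
  qed
  show ?thesis
    using leibniz[of "\<lambda>j x. hD j (1 + x)" "\<lambda>j x. (-1) ^ j * hD j (1 - x)", OF f g, of k x]
    unfolding phiD_def by simp
qed

lemma phiD_supp: "\<bar>x\<bar> \<ge> 1 \<Longrightarrow> phiD k x = 0"
  unfolding phiD_def by (intro sum.neutral) (cases "x \<ge> 1"; auto simp: hD_nonpos)

lemma phiD0: "phiD 0 x = hD 0 (1 + x) * hD 0 (1 - x)"
  by (simp add: phiD_def)

lemma phiD0_even: "phiD 0 (- x) = phiD 0 x"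
  by (simp add: phiD0)

lemma phiD0_bounds: "0 \<le> phiD 0 x" "phiD 0 x \<le> 1"
  unfolding phiD0 using hD0_bounds[of "1+x"] hD0_bounds[of "1-x"]
  by (auto intro: mult_nonneg_nonneg mult_le_one)

lemma phiD0_lower: assumes "\<bar>x\<bar> \<le> 1/2" shows "exp (-4) \<le> phiD 0 x"
proof -
  have a: "exp (-2) \<le> hD 0 (1 + x)"
  proof -
    have "1/2 \<le> 1 + x" using assms by linarith
    then have "inverse (1 + x) \<le> inverse (1/2)" by (intro le_imp_inverse_le) auto
    then have "inverse (1 + x) \<le> 2" by simp
    then show ?thesis using assms by (simp add: hD0_pos)
  qed
  have b: "exp (-2) \<le> hD 0 (1 - x)"
  proof -
    have "1/2 \<le> 1 - x" using assms by linarith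
    then have "inverse (1 - x) \<le> inverse (1/2)" by (intro le_imp_inverse_le) auto
    then have "inverse (1 - x) \<le> 2" by simp
    then show ?thesis using assms by (simp add: hD0_pos)
  qed
  have "exp (-4) = exp (-2) * exp (-2::real)" by (simp flip: exp_add)
  also have "\<dots> \<le> hD 0 (1 + x) * hD 0 (1 - x)"
    by (intro mult_mono a b) (auto simp: hD0_bounds)
  finally show ?thesis by (simp add: phiD0)
qed


definition Tset :: "real \<Rightarrow> int set" where "Tset x = {n. \<bar>x - of_int n\<bar> < 1}"

lemma Tset_sub: "Tset x \<subseteq> {\<lfloor>x\<rfloor>-1..\<lfloor>x\<rfloor>+1}"
proof
  fix n assume "n \<in> Tset x"
  then have "\<bar>x - of_int n\<bar> < 1" by (simp add: Tset_def)
  moreover have "of_int \<lfloor>x\<rfloor> \<le> x" "x < of_int \<lfloor>x\<rfloor> + 1" by linarith+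
  ultimately have "(of_int n :: real) < of_int \<lfloor>x\<rfloor> + 2" "of_int \<lfloor>x\<rfloor> - 2 < (of_int n :: real)"
    unfolding abs_less_iff by linarith+
  then have "(of_int n :: real) < of_int (\<lfloor>x\<rfloor> + 2)" "of_int (\<lfloor>x\<rfloor> - 2) < (of_int n :: real)" by simp_all
  then have "n < \<lfloor>x\<rfloor> + 2" "\<lfloor>x\<rfloor> - 2 < n" by (simp_all only: of_int_less_iff)
  then show "n \<in> {\<lfloor>x\<rfloor>-1..\<lfloor>x\<rfloor>+1}" by auto
qed

lemma Tset_fin: "finite (Tset x)"
  by (rule finite_subset[OF Tset_sub]) simp

definition wD :: "(real \<Rightarrow> real) \<Rightarrow> nat \<Rightarrow> real \<Rightarrow> real" where
  "wD v k x = (if k = 0 then 1 else 0) + (\<Sum>n\<in>Tset x. v (of_int n) * phiD k (x - of_int n))"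

lemma wD_local:
  assumes "\<bar>y - x0\<bar> < 1"
  shows "(\<Sum>n\<in>Tset y. v (of_int n) * phiD k (y - of_int n)) =
         (\<Sum>n\<in>{\<lfloor>x0\<rfloor>-2..\<lfloor>x0\<rfloor>+2}. v (of_int n) * phiD k (y - of_int n))"
proof (rule sum.mono_neutral_left)
  show "Tset y \<subseteq> {\<lfloor>x0\<rfloor>-2..\<lfloor>x0\<rfloor>+2}"
  proof
    fix n assume "n \<in> Tset y"
    then have "\<bar>y - of_int n\<bar> < 1" by (simp add: Tset_def)
    moreover have "of_int \<lfloor>x0\<rfloor> \<le> x0" "x0 < of_int \<lfloor>x0\<rfloor> + 1" by linarith+
    ultimately have "(of_int n :: real) < of_int \<lfloor>x0\<rfloor> + 3" "of_int \<lfloor>x0\<rfloor> - 3 < (of_int n :: real)"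
      using assms unfolding abs_less_iff by linarith+
    then have "(of_int n :: real) < of_int (\<lfloor>x0\<rfloor> + 3)" "of_int (\<lfloor>x0\<rfloor> - 3) < (of_int n :: real)" by simp_all
    then have "n < \<lfloor>x0\<rfloor> + 3" "\<lfloor>x0\<rfloor> - 3 < n" by (simp_all only: of_int_less_iff)
    then show "n \<in> {\<lfloor>x0\<rfloor>-2..\<lfloor>x0\<rfloor>+2}" by auto
  qed
qed (auto simp: Tset_def phiD_supp)

lemma wD_deriv: "(wD v k has_real_derivative wD v (Suc k) x) (at x)"
proof -
  define S where "S = {\<lfloor>x\<rfloor>-2..\<lfloor>x\<rfloor>+2}"
  define g where "g y = (if k = 0 then 1 else 0) + (\<Sum>n\<in>S. v (of_int n) * phiD k (y - of_int n))" for y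
  have "(g has_real_derivative 0 + (\<Sum>n\<in>S. v (of_int n) * phiD (Suc k) (x - of_int n))) (at x)"
    unfolding g_def
  proof (intro DERIV_add DERIV_const DERIV_sum DERIV_cmult)
    fix n :: int
    have "((\<lambda>y. y - of_int n) has_real_derivative 1) (at x)" by (auto intro!: derivative_eq_intros)
    from DERIV_chain2[OF phiD_deriv this]
    show "((\<lambda>y. phiD k (y - of_int n)) has_real_derivative phiD (Suc k) (x - of_int n)) (at x)" by simp
  qed
  moreover have "0 + (\<Sum>n\<in>S. v (of_int n) * phiD (Suc k) (x - of_int n)) = wD v (Suc k) x"
    unfolding wD_def S_def using wD_local[of x x v "Suc k"] by simp
  ultimately have d: "(g has_real_derivative wD v (Suc k) x) (at x)" by simp
  show ?thesis
  proof (rule has_field_derivative_transform_within_open[OF d, of "ball x 1"])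
    fix y assume "y \<in> ball x 1"
    then have "\<bar>y - x\<bar> < 1" by (simp add: dist_real_def abs_minus_commute)
    then show "g y = wD v k y" unfolding g_def wD_def S_def using wD_local[of y x v k] by simp
  qed auto
qed

theorem lemma2p6:
  fixes v :: "real \<Rightarrow> real"
  assumes "admissible v"
  shows "\<exists>w. admissible w \<and> smooth_real w \<and>
           (\<exists>c>0. \<forall>s. w s / c \<le> v s \<and> v s \<le> c * w s) \<and>
           ((\<forall>s. v (- s) = v s) \<longrightarrow> (\<forall>s. w (- s) = w s))"
proof -
  have v1: "\<And>s. v s \<ge> 1" using assms unfolding admissible_def by blast
  obtain C where C: "C > 0" "\<And>s t. v (s + t) \<le> C * (v s + v t)" using adm_bound[OF assms] by blast
  obtain B where B: "\<And>y. \<bar>y\<bar> \<le> 1 \<Longrightarrow> v y \<le> B" using adm_locbdd[OF assms] by blast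
  have B1: "B \<ge> 1" using B[of 0] v1[of 0] by simp
  define K where "K = C * (1 + B)"
  have K0: "K > 0" unfolding K_def using C B1 by simp
  have near: "v x \<le> K * v y" if "\<bar>x - y\<bar> \<le> 1" for x y
  proof -
    have "v x = v (y + (x - y))" by simp
    also have "\<dots> \<le> C * (v y + v (x - y))" by (rule C)
    also have "\<dots> \<le> C * (v y + B * v y)"
      using B[OF that] v1[of y] B1 C(1)
      by (intro mult_left_mono add_left_mono) (auto intro: order.trans[of _ B] simp: mult_le_cancel_left1)
    finally show ?thesis by (simp add: K_def algebra_simps)
  qed
  define w where "w = wD v 0"
  have w_eq: "w x = 1 + (\<Sum>n\<in>Tset x. v (of_int n) * phiD 0 (x - of_int n))" for x
    by (simp add: w_def wD_def)
  have sum_nn: "0 \<le> (\<Sum>n\<in>Tset x. v (of_int n) * phiD 0 (x - of_int n))" for x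
    using v1 phiD0_bounds by (intro sum_nonneg) (smt (verit) mult_nonneg_nonneg)
  have w1: "w x \<ge> 1" for x using sum_nn[of x] w_eq[of x] by simp
  have wup: "w x \<le> (1 + 3 * K) * v x" for x
  proof -
    have "(\<Sum>n\<in>Tset x. v (of_int n) * phiD 0 (x - of_int n)) \<le> (\<Sum>n\<in>{\<lfloor>x\<rfloor>-1..\<lfloor>x\<rfloor>+1}. v (of_int n) * phiD 0 (x - of_int n))"
      using v1 phiD0_bounds by (intro sum_mono2 Tset_sub) (auto intro: mult_nonneg_nonneg order.trans[OF zero_le_one])
    also have "\<dots> \<le> (\<Sum>n\<in>{\<lfloor>x\<rfloor>-1..\<lfloor>x\<rfloor>+1}. K * v x)"
    proof (rule sum_mono)
      fix n assume n: "n \<in> {\<lfloor>x\<rfloor>-1..\<lfloor>x\<rfloor>+1}"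
      show "v (of_int n) * phiD 0 (x - of_int n) \<le> K * v x"
      proof (cases "\<bar>x - of_int n\<bar> < 1")
        case True
        then have "v (of_int n) \<le> K * v x" by (intro near) simp
        moreover have "v (of_int n) * phiD 0 (x - of_int n) \<le> v (of_int n)"
          using phiD0_bounds[of "x - of_int n"] v1[of "of_int n"] by (simp add: mult_le_cancel_left1)
        ultimately show ?thesis by linarith
      next
        case False
        then show ?thesis using phiD_supp[of "x - of_int n" 0] K0 v1[of x] by simp
      qed
    qed
    also have "\<dots> = 3 * K * v x" by simp
    finally show ?thesis using w_eq[of x] v1[of x] by (simp add: algebra_simps)
  qed
  have wlow: "v x \<le> K * exp 4 * w x" for x
  proof -
    define n0 where "n0 = \<lfloor>x + 1/2\<rfloor>"
    have h: "\<bar>x - of_int n0\<bar> \<le> 1/2" unfolding n0_def by linarith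
    then have n0T: "n0 \<in> Tset x" by (simp add: Tset_def)
    have "v (of_int n0) * exp (-4) \<le> v (of_int n0) * phiD 0 (x - of_int n0)"
      using phiD0_lower[OF h] v1[of "of_int n0"] by simp
    also have "\<dots> \<le> (\<Sum>n\<in>Tset x. v (of_int n) * phiD 0 (x - of_int n))"
      using v1 phiD0_bounds by (intro member_le_sum n0T Tset_fin) (smt (verit) mult_nonneg_nonneg)
    also have "\<dots> \<le> w x" using w_eq[of x] by simp
    finally have a: "v (of_int n0) \<le> exp 4 * w x" by (simp add: exp_minus field_simps)
    have "v x \<le> K * v (of_int n0)" using h by (intro near) simp
    also have "\<dots> \<le> K * (exp 4 * w x)" using a K0 by simp
    finally show ?thesis by simp
  qed
  define c where "c = (1 + 3 * K) + K * exp 4"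
  have c0: "c > 0" unfolding c_def using K0 by (simp add: add_pos_pos)
  have wc: "w s \<le> c * v s" for s
  proof -
    have "(1 + 3 * K) * v s \<le> c * v s" unfolding c_def using v1[of s] K0 by (intro mult_right_mono) auto
    then show ?thesis using wup[of s] by linarith
  qed
  have vc: "v s \<le> c * w s" for s
  proof -
    have "K * exp 4 * w s \<le> c * w s" unfolding c_def using w1[of s] K0 by (intro mult_right_mono) auto
    then show ?thesis using wlow[of s] by linarith
  qed
  have equiv: "\<forall>s. w s / c \<le> v s \<and> v s \<le> c * w s"
    using wc vc c0 by (simp add: pos_divide_le_eq mult.commute)
  have smooth: "smooth_real w"
    unfolding smooth_real_def by (rule exI[of _ "wD v"]) (simp add: w_def wD_deriv)
  have cont: "continuous_on UNIV w"
    unfolding w_def using wD_deriv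
    by (meson DERIV_isCont continuous_at_imp_continuous_on)
  have adm: "admissible w"
    unfolding admissible_def
  proof (intro conjI allI exI)
    show "w \<in> borel_measurable borel" using cont by (rule borel_measurable_continuous_onI)
    show "1 \<le> w s" for s by (rule w1)
    fix s t
    have "w (s + t) \<le> c * v (s + t)" by (rule wc)
    also have "\<dots> \<le> c * (C * (v s + v t))" using c0 C by simp
    also have "\<dots> \<le> c * (C * (c * w s + c * w t))" using c0 C vc[of s] vc[of t]
      by (intro mult_left_mono add_mono) auto
    finally have "w (s + t) \<le> (c * C * c) * (w s + w t)" by (simp add: algebra_simps)
    moreover have "w s + w t > 0" using w1[of s] w1[of t] by simp
    ultimately show "w (s + t) / (w s + w t) \<le> c * C * c" by (simp add: pos_divide_le_eq)
  qed
  have even: "\<forall>s. w (- s) = w s" if ev: "\<forall>s. v (- s) = v s"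
  proof
    fix s
    have TS: "Tset (- s) = uminus ` Tset s"
    proof -
      have "Tset (- s) = uminus ` (uminus ` Tset (- s))" by (simp add: image_image)
      moreover have "uminus ` Tset (- s) = Tset s"
        unfolding Tset_def by (auto simp: image_iff abs_minus_commute intro!: exI[of _ "- _"])
      ultimately show ?thesis by simp
    qed
    have "(\<Sum>n\<in>Tset (- s). v (of_int n) * phiD 0 (- s - of_int n)) =
          (\<Sum>n\<in>Tset s. v (of_int (- n)) * phiD 0 (- s - of_int (- n)))"
      unfolding TS by (subst sum.reindex) (auto simp: inj_on_def)
    also have "\<dots> = (\<Sum>n\<in>Tset s. v (of_int n) * phiD 0 (s - of_int n))"
    proof (intro sum.cong refl)
      fix n
      have "v (of_int (- n)) = v (of_int n)" using ev[rule_format, of "of_int n"] by simp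
      moreover have "phiD 0 (- s - of_int (- n)) = phiD 0 (s - of_int n)"
        using phiD0_even[of "s - of_int n"] by simp
      ultimately show "v (of_int (- n)) * phiD 0 (- s - of_int (- n)) = v (of_int n) * phiD 0 (s - of_int n)"
        by simp
    qed
    finally show "w (- s) = w s" using w_eq[of s] w_eq[of "- s"] by simp
  qed
  show ?thesis using adm smooth equiv even c0 by blast
qed

end
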